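(* Let $n\ge 1$ and $m\ge 2$ be integers with $m\nmid n$, and let $\chi_{n,m}\colon\mathbb{F}_2^n\to\mathbb{F}_2^n$ be given by $\chi_{n,m}(x)=y$ with $y_i=x_i+x_{i+m}(x_{i+m-1}+1)(x_{i+m-2}+1)\cdots(x_{i+1}+1)$ for $i\in\{0,\dots,n-1\}$, indices modulo $n$. Then $\chi_{n,m}$ is an involution (i.e. $\chi_{n,m}\circ\chi_{n,m}$ is the identity) if and only if $n\le 2m-1$. *)

theory Defs
  imports Main "HOL-Library.Z2"
begin

text \<open>Vectors in F_2^n are represented as functions nat => bit (bit is the
  two-element field from HOL-Library.Z2) whose values at indices >= n are 0.\<close>

definition vecs :: "nat \<Rightarrow> (nat \<Rightarrow> bit) set" where
  "vecs n = {x. \<forall>i\<ge>n. x i = 0}"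

definition chi :: "nat \<Rightarrow> nat \<Rightarrow> (nat \<Rightarrow> bit) \<Rightarrow> (nat \<Rightarrow> bit)" where
  "chi n m x = (\<lambda>i. if i < n then
       x i + x ((i + m) mod n) * (\<Prod>j\<in>{1..<m}. (x ((i + j) mod n) + 1))
     else 0)"

end

theory Submission
  imports Defs
begin

lemma bit_cases2: "(b::bit) = 0 \<or> b = 1"
  by (cases "b = 0") simp_all

lemma prod_bit: "finite A \<Longrightarrow> (\<Prod>j\<in>A. (g j :: bit)) = (if \<forall>j\<in>A. g j = 1 then 1 else 0)"
  by (induction A rule: finite_induct) auto

definition PP :: "nat \<Rightarrow> nat \<Rightarrow> (nat \<Rightarrow> bit) \<Rightarrow> nat \<Rightarrow> bool" where
  "PP n m x i = ((\<forall>j\<in>{1..<m}. x ((i + j) mod n) = 0) \<and> x ((i + m) mod n) = 1)"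

lemma chi_eq: "chi n m x i = (if i < n then x i + (if PP n m x i then 1 else 0) else 0)"
proof -
  have "(\<Prod>j\<in>{1..<m}. (x ((i + j) mod n) + 1)) = (if \<forall>j\<in>{1..<m}. x ((i + j) mod n) = 0 then 1 else 0)"
  proof -
    have "\<And>j. (x ((i + j) mod n) + 1 = 1) = (x ((i + j) mod n) = 0)"
      using bit_cases2 by fastforce
    then show ?thesis by (simp add: prod_bit)
  qed
  moreover have "\<And>a::bit. (a * (if Q then 1 else 0)) = (if Q \<and> a = 1 then 1 else 0)" for Q
    using bit_cases2 by fastforce
  ultimately show ?thesis unfolding chi_def PP_def by auto
qed

lemma chi_vecs: "chi n m x \<in> vecs n"
  unfolding vecs_def chi_def by auto

lemma chi_id_noP: "x \<in> vecs n \<Longrightarrow> \<forall>i. \<not> PP n m x i \<Longrightarrow> chi n m x = x"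
  unfolding vecs_def by (auto simp: chi_eq)

lemma noP_small: assumes "0 < n" "n < m" shows "\<not> PP n m x i"
proof
  assume P: "PP n m x i"
  have "m - n \<in> {1..<m}" using assms by auto
  then have "x ((i + (m - n)) mod n) = 0" using P unfolding PP_def by blast
  moreover have "(i + (m - n)) mod n = (i + m) mod n"
  proof -
    obtain k where k: "m = n + k" using assms less_imp_add_positive by blast
    then have "m - n = k" by simp
    moreover have "i + m = (i + k) + n" using k by simp
    ultimately show ?thesis by (metis mod_add_self2)
  qed
  ultimately show False using P unfolding PP_def by simp
qed

lemma A':
  assumes "m < n" "n < 2 * m" "PP n m x i" "PP n m x ((i + d) mod n)" "1 \<le> d" "d \<le> m"
  shows False
proof (cases "d < m")
  case True
  have "m - d \<in> {1..<m}" using True assms by auto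
  then have "x (((i + d) mod n + (m - d)) mod n) = 0" using assms(4) unfolding PP_def by blast
  moreover have "((i + d) mod n + (m - d)) mod n = (i + m) mod n"
  proof -
    have "((i + d) mod n + (m - d)) mod n = (i + d + (m - d)) mod n" by (simp add: mod_add_left_eq)
    also have "i + d + (m - d) = i + m" using True by simp
    finally show ?thesis .
  qed
  ultimately show False using assms(3) unfolding PP_def by simp
next
  case False
  then have dm: "d = m" using assms by auto
  have "x (((i + m) mod n + m) mod n) = 1" using assms(4) dm unfolding PP_def by blast
  moreover have "((i + m) mod n + m) mod n = (i + (2*m - n)) mod n"
  proof -
    have "((i + m) mod n + m) mod n = (i + m + m) mod n" by (simp add: mod_add_left_eq)
    also have "i + m + m = i + 2*m" by simp
    also have "i + 2*m = (i + (2*m - n)) + n" using assms by auto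
    finally show ?thesis by simp
  qed
  moreover have "2*m - n \<in> {1..<m}" using assms by auto
  ultimately show False using assms(3) unfolding PP_def by auto
qed

lemma C:
  assumes "x \<in> vecs n" "0 < n" "\<forall>d\<in>{1..m}. \<not> PP n m x ((i + d) mod n)" "1 \<le> m"
  shows "PP n m (chi n m x) i = PP n m x i"
proof -
  have e: "\<And>d. d\<in>{1..m} \<Longrightarrow> chi n m x ((i + d) mod n) = x ((i + d) mod n)"
    using assms by (simp add: chi_eq)
  have "chi n m x ((i + m) mod n) = x ((i + m) mod n)" using e assms(4) by auto
  moreover have "\<forall>j\<in>{1..<m}. chi n m x ((i + j) mod n) = x ((i + j) mod n)" using e by auto
  ultimately show ?thesis unfolding PP_def by auto
qed

lemma main_large:
  assumes "x \<in> vecs n" "m < n" "n < 2 * m"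
  shows "PP n m (chi n m x) i = PP n m x i"
proof -
  have n0: "0 < n" using assms by auto
  have m1: "1 \<le> m" using assms by auto
  have pos: "PP n m (chi n m x) k" if "PP n m x k" for k
  proof -
    have "\<forall>d\<in>{1..m}. \<not> PP n m x ((k + d) mod n)" using A'[OF assms(2,3) that] by auto
    then show ?thesis using C[OF assms(1) n0 _ m1] that by auto
  qed
  show ?thesis
  proof (cases "PP n m x i")
    case True then show ?thesis using pos by auto
  next
    case False
    show ?thesis
    proof (rule ccontr)
      assume ne: "PP n m (chi n m x) i \<noteq> PP n m x i"
      then obtain d where d: "d \<in> {1..m}" "PP n m x ((i + d) mod n)"
        using C[OF assms(1) n0 _ m1, of i] by blast
      have "PP n m (chi n m x) ((i + d) mod n)" using pos d by auto
      moreover have "PP n m (chi n m x) i" using ne False by auto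
      ultimately show False using A'[OF assms(2,3)] d by auto
    qed
  qed
qed

theorem corollary3:
  fixes n m :: nat
  assumes "n \<ge> 1" and "m \<ge> 2" and "\<not> m dvd n"
  shows "(\<forall>x\<in>vecs n. chi n m (chi n m x) = x) \<longleftrightarrow> n \<le> 2 * m - 1"
proof
  assume inv: "\<forall>x\<in>vecs n. chi n m (chi n m x) = x"
  show "n \<le> 2 * m - 1"
  proof (rule ccontr)
    assume "\<not> n \<le> 2 * m - 1"
    moreover have "n \<noteq> 2 * m" using assms(3) by auto
    ultimately have big: "2 * m < n" by auto
    define x :: "nat \<Rightarrow> bit" where "x = (\<lambda>i. if i = m \<or> i = 2 * m then 1 else 0)"
    have xv: "x \<in> vecs n" using big unfolding x_def vecs_def by auto
    have P0: "PP n m x 0" using big assms(2) unfolding PP_def x_def by auto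
    have Pm: "PP n m x m" using big assms(2) unfolding PP_def x_def by auto
    have y0: "chi n m x 0 = 1" using P0 big assms(2) by (simp add: chi_eq x_def)
    have ym: "chi n m x m = 0" using Pm big by (simp add: chi_eq x_def)
    have "\<not> PP n m (chi n m x) 0" using ym big unfolding PP_def by auto
    then have "chi n m (chi n m x) 0 = 1" using y0 big by (simp add: chi_eq)
    moreover have "x 0 = 0" using assms(2) unfolding x_def by auto
    ultimately show False using inv xv by (metis zero_neq_one)
  qed
next
  assume le: "n \<le> 2 * m - 1"
  show "\<forall>x\<in>vecs n. chi n m (chi n m x) = x"
  proof
    fix x assume xv: "x \<in> vecs n"
    have "n \<noteq> m" using assms(3) by auto
    then consider "n < m" | "m < n" by linarith
    then show "chi n m (chi n m x) = x"
    proof cases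
      case 1
      then have "chi n m x = x" using chi_id_noP[OF xv] noP_small assms(1) by auto
      then show ?thesis by simp
    next
      case 2
      have lt: "n < 2 * m" using le assms(2) by auto
      show ?thesis
      proof
        fix i
        show "chi n m (chi n m x) i = x i"
        proof (cases "i < n")
          case True
          have "chi n m (chi n m x) i = x i + (if PP n m x i then 1 else 0) + (if PP n m x i then 1 else 0)"
            using True main_large[OF xv 2 lt, of i] by (simp add: chi_eq)
          then show ?thesis by simp
        next
          case False then show ?thesis using xv unfolding vecs_def by (simp add: chi_eq)
        qed
      qed
    qed
  qed
qed

end
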